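(* Let $G$ be a finite simple undirected graph whose VC-dimension is $d$. Then for every simple coalition game $\mathcal G$ over $G$, $\dfrac{\kappa(\mathcal G)}{\rho(\mathcal G)}\le d+1$.
   Context: Coalition game over $G=(V,E)$: a valuation $v:2^V\to\mathbb Z_{\ge 0}$ with $v(\emptyset)=0$, $v(S)=0$ whenever $G[S]$ is disconnected, and $v$ not identically zero; it is simple if $v(S)\in\{0,1\}$ for all $S$. $\kappa(\mathcal G)=\min\{\sum_{i\in V}x_i: x\in\mathbb Z_{\ge0}^V,\ \sum_{i\in S}x_i\ge v(S)\ \forall S\subseteq V\}$; $\rho(\mathcal G)$ is the maximum of $\sum_{S\in\mathcal P}v(S)$ over families $\mathcal P$ of pairwise disjoint subsets of $V$. A set $X\subseteq V$ is shattered by a family $\mathcal R$ of subsets of $V$ if for every $Y\subseteq X$ there is $R\in\mathcal R$ with $R\cap X=Y$; the VC-dimension of $\mathcal R$ is the maximum size of a shattered set. The VC-dimension of the graph $G$ is the VC-dimension of the family of all nonempty $S\subseteq V$ such that $G[S]$ is connected. *)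

theory Defs
  imports "HOL-Analysis.Analysis"
begin

definition simple_graph :: "'a set \<Rightarrow> ('a \<times> 'a) set \<Rightarrow> bool" where
  "simple_graph V E \<longleftrightarrow> finite V \<and> E \<subseteq> V \<times> V \<and> sym E \<and> irrefl E"

definition induced_connected :: "('a \<times> 'a) set \<Rightarrow> 'a set \<Rightarrow> bool" where
  "induced_connected E S \<longleftrightarrow> S \<noteq> {} \<and> (\<forall>x\<in>S. \<forall>y\<in>S. (x, y) \<in> (E \<inter> (S \<times> S))\<^sup>*)"

definition coalition_game :: "'a set \<Rightarrow> ('a \<times> 'a) set \<Rightarrow> ('a set \<Rightarrow> nat) \<Rightarrow> bool" where
  "coalition_game V E v \<longleftrightarrow> v {} = 0
     \<and> (\<forall>S. S \<subseteq> V \<longrightarrow> S \<noteq> {} \<longrightarrow> \<not> induced_connected E S \<longrightarrow> v S = 0)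
     \<and> (\<exists>S. S \<subseteq> V \<and> v S \<noteq> 0)"

definition simple_game :: "'a set \<Rightarrow> ('a set \<Rightarrow> nat) \<Rightarrow> bool" where
  "simple_game V v \<longleftrightarrow> (\<forall>S. S \<subseteq> V \<longrightarrow> v S \<in> {0, 1})"

definition kappa :: "'a set \<Rightarrow> ('a set \<Rightarrow> nat) \<Rightarrow> nat" where
  "kappa V v = Inf {sum x V | x :: 'a \<Rightarrow> nat. \<forall>S. S \<subseteq> V \<longrightarrow> sum x S \<ge> v S}"

definition rho :: "'a set \<Rightarrow> ('a set \<Rightarrow> nat) \<Rightarrow> nat" where
  "rho V v = Max {sum v P | P. P \<subseteq> Pow V \<and> disjoint P}"

definition shatters :: "'a set set \<Rightarrow> 'a set \<Rightarrow> bool" where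
  "shatters R X \<longleftrightarrow> (\<forall>Y. Y \<subseteq> X \<longrightarrow> (\<exists>A\<in>R. A \<inter> X = Y))"

definition vc_dim :: "'a set \<Rightarrow> 'a set set \<Rightarrow> nat" where
  "vc_dim V R = Max {card X | X. X \<subseteq> V \<and> shatters R X}"

definition graph_vc_dim :: "'a set \<Rightarrow> ('a \<times> 'a) set \<Rightarrow> nat" where
  "graph_vc_dim V E = vc_dim V {S. S \<subseteq> V \<and> induced_connected E S}"

end

theory Submission
  imports Defs
begin

definition reach :: "('a \<times> 'a) set \<Rightarrow> 'a set \<Rightarrow> 'a \<Rightarrow> 'a set" where
  "reach E U r = {x. (r, x) \<in> (E \<inter> U \<times> U)\<^sup>*}"

lemma reach_r: "r \<in> reach E U r" by (simp add: reach_def)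

lemma reach_subset: assumes "r \<in> U" shows "reach E U r \<subseteq> U"
proof
  fix x assume "x \<in> reach E U r"
  hence "(r, x) \<in> (E \<inter> U \<times> U)\<^sup>*" by (simp add: reach_def)
  thus "x \<in> U" using assms by (induction rule: rtrancl_induct) auto
qed

lemma reach_step: assumes "x \<in> reach E U r" "(x, y) \<in> E" "x \<in> U" "y \<in> U"
  shows "y \<in> reach E U r"
  using assms by (auto simp: reach_def intro: rtrancl_into_rtrancl)

lemma reach_inside:
  assumes "(r, x) \<in> (E \<inter> U \<times> U)\<^sup>*"
  shows "(r, x) \<in> (E \<inter> reach E U r \<times> reach E U r)\<^sup>*"
  using assms
proof (induction rule: rtrancl_induct)
  case base thus ?case by simp
next
  case (step y z)
  have "y \<in> reach E U r" using step(1) by (simp add: reach_def)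
  moreover have "z \<in> reach E U r" using step(1,2) by (auto simp: reach_def intro: rtrancl_into_rtrancl)
  ultimately show ?case using step by (auto intro: rtrancl_into_rtrancl)
qed

lemma exit_edge:
  assumes "(x, y) \<in> R\<^sup>*" "x \<in> A" "y \<notin> A"
  shows "\<exists>a b. (a, b) \<in> R \<and> a \<in> A \<and> b \<notin> A"
  using assms by (induction rule: rtrancl_induct) auto

lemma conn_from_root:
  assumes "sym E" "r \<in> A" "\<forall>x\<in>A. (r, x) \<in> (E \<inter> A \<times> A)\<^sup>*"
  shows "induced_connected E A"
proof -
  have s: "sym ((E \<inter> A \<times> A)\<^sup>*)"
    apply (rule sym_rtrancl) using assms(1) by (auto simp: sym_def)
  show ?thesis unfolding induced_connected_def
  proof (intro conjI ballI)
    show "A \<noteq> {}" using assms by auto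
  next
    fix x y assume "x \<in> A" "y \<in> A"
    hence "(x, r) \<in> (E \<inter> A \<times> A)\<^sup>*" "(r, y) \<in> (E \<inter> A \<times> A)\<^sup>*"
      using assms(3) s by (auto dest: symD)
    thus "(x, y) \<in> (E \<inter> A \<times> A)\<^sup>*" by (rule rtrancl_trans)
  qed
qed

lemma boundary_card:
  assumes G: "simple_graph V E" and SV: "S \<subseteq> V" and r: "r \<in> V - S"
  shows "card {s\<in>S. \<exists>c\<in>reach E (V - S) r. (s, c) \<in> E} \<le> graph_vc_dim V E"
proof -
  define C0 where "C0 = reach E (V - S) r"
  define B where "B = {s\<in>S. \<exists>c\<in>C0. (s, c) \<in> E}"
  define R where "R = {S. S \<subseteq> V \<and> induced_connected E S}"
  have symE: "sym E" and EV: "E \<subseteq> V \<times> V" and finV: "finite V" using G by (auto simp: simple_graph_def)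
  have C0sub: "C0 \<subseteq> V - S" unfolding C0_def by (rule reach_subset[OF r])
  have rC0: "r \<in> C0" by (simp add: C0_def reach_r)
  have sh: "shatters R B" unfolding shatters_def
  proof (intro allI impI)
    fix Y assume Y: "Y \<subseteq> B"
    define A where "A = Y \<union> C0"
    have AV: "A \<subseteq> V" using Y C0sub SV by (auto simp: A_def B_def)
    have paths: "\<forall>x\<in>A. (r, x) \<in> (E \<inter> A \<times> A)\<^sup>*"
    proof
      fix x assume x: "x \<in> A"
      have mono: "(E \<inter> C0 \<times> C0)\<^sup>* \<subseteq> (E \<inter> A \<times> A)\<^sup>*"
        by (rule rtrancl_mono) (auto simp: A_def)
      have inC: "(r, c) \<in> (E \<inter> A \<times> A)\<^sup>*" if "c \<in> C0" for c
      proof -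
        have "(r, c) \<in> (E \<inter> (V - S) \<times> (V - S))\<^sup>*" using that by (simp add: C0_def reach_def)
        from reach_inside[OF this] show ?thesis using mono by (auto simp: C0_def)
      qed
      show "(r, x) \<in> (E \<inter> A \<times> A)\<^sup>*"
      proof (cases "x \<in> C0")
        case True thus ?thesis by (rule inC)
      next
        case False
        hence "x \<in> Y" using x by (simp add: A_def)
        then obtain c where c: "c \<in> C0" "(x, c) \<in> E" using Y by (auto simp: B_def)
        hence "(c, x) \<in> E \<inter> A \<times> A" using symE \<open>x \<in> Y\<close> by (auto simp: A_def dest: symD)
        with inC[OF c(1)] show ?thesis by (rule rtrancl_into_rtrancl)
      qed
    qed
    have "induced_connected E A"
      by (rule conn_from_root[OF symE _ paths]) (simp add: A_def rC0)
    hence "A \<in> R" using AV by (simp add: R_def)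
    moreover have "A \<inter> B = Y" using Y C0sub by (auto simp: A_def B_def)
    ultimately show "\<exists>A\<in>R. A \<inter> B = Y" by blast
  qed
  have BV: "B \<subseteq> V" using SV by (auto simp: B_def)
  have fin: "finite {card X |X. X \<subseteq> V \<and> shatters R X}"
  proof -
    have "{card X |X. X \<subseteq> V \<and> shatters R X} \<subseteq> card ` Pow V" by auto
    thus ?thesis using finV by (meson finite_Pow_iff finite_imageI finite_subset)
  qed
  have "card B \<le> Max {card X |X. X \<subseteq> V \<and> shatters R X}"
    by (rule Max_ge[OF fin]) (use BV sh in blast)
  thus ?thesis by (simp add: graph_vc_dim_def vc_dim_def R_def B_def C0_def)
qed

lemma key:
  assumes G: "simple_graph V E" and Fc: "\<forall>W\<in>F. W \<subseteq> V \<and> induced_connected E W"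
    and fin: "finite F" and ne: "F \<noteq> {}"
  shows "\<exists>H S. S \<in> F \<and> H \<subseteq> V \<and> card H \<le> graph_vc_dim V E + 1 \<and> (\<forall>W\<in>F. W \<inter> H = {} \<longrightarrow> W \<inter> S = {})"
proof -
  have symE: "sym E" and EV: "E \<subseteq> V \<times> V" and finV: "finite V" using G by (auto simp: simple_graph_def)
  obtain S0 where S0: "S0 \<in> F" using ne by blast
  have "S0 \<noteq> {}" using Fc S0 by (auto simp: induced_connected_def)
  then obtain r where rS0: "r \<in> S0" by blast
  have rV: "r \<in> V" using Fc S0 rS0 by auto
  define RV where "RV = reach E V r"
  have meet: "W \<subseteq> RV" if W: "W \<in> F" "W \<inter> RV \<noteq> {}" for W
  proof
    fix x assume x: "x \<in> W"
    obtain w where w: "w \<in> W" "w \<in> RV" using W by blast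
    have "(w, x) \<in> (E \<inter> W \<times> W)\<^sup>*" using Fc W w x by (auto simp: induced_connected_def)
    moreover have "(E \<inter> W \<times> W)\<^sup>* \<subseteq> (E \<inter> V \<times> V)\<^sup>*" using Fc W by (intro rtrancl_mono) auto
    ultimately have "(w, x) \<in> (E \<inter> V \<times> V)\<^sup>*" by blast
    with w(2) show "x \<in> RV" by (auto simp: RV_def reach_def)
  qed
  have S0RV: "S0 \<subseteq> RV" using meet[OF S0] rS0 reach_r[of r E V] by (auto simp: RV_def)
  define F' where "F' = {W\<in>F. r \<notin> W \<and> W \<inter> RV \<noteq> {}}"
  show ?thesis
  proof (cases "F' = {}")
    case True
    show ?thesis
    proof (intro exI conjI)
      show "S0 \<in> F" by (rule S0)
      show "{r} \<subseteq> V" using rV by simp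
      show "card {r} \<le> graph_vc_dim V E + 1" by simp
      show "\<forall>W\<in>F. W \<inter> {r} = {} \<longrightarrow> W \<inter> S0 = {}"
        using True S0RV by (auto simp: F'_def)
    qed
  next
    case False
    define f where "f W = card (reach E (V - W) r)" for W
    have finF': "finite F'" using fin by (simp add: F'_def)
    obtain S where S: "S \<in> F'" and Smax: "\<forall>W\<in>F'. f W \<le> f S"
    proof -
      have "Max (f ` F') \<in> f ` F'" using finF' False by (intro Max_in) auto
      then obtain S where "S \<in> F'" "f S = Max (f ` F')" by auto
      moreover have "\<forall>W\<in>F'. f W \<le> Max (f ` F')" using finF' by auto
      ultimately show ?thesis using that by auto
    qed
    have SF: "S \<in> F" and rS: "r \<notin> S" and SRV: "S \<inter> RV \<noteq> {}" using S by (auto simp: F'_def)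
    have SV: "S \<subseteq> V" using Fc SF by auto
    have rVS: "r \<in> V - S" using rV rS by simp
    define C0 where "C0 = reach E (V - S) r"
    define B where "B = {s\<in>S. \<exists>c\<in>C0. (s, c) \<in> E}"
    have C0sub: "C0 \<subseteq> V - S" unfolding C0_def by (rule reach_subset[OF rVS])
    have rC0: "r \<in> C0" by (simp add: C0_def reach_r)
    have cardB: "card B \<le> graph_vc_dim V E"
      unfolding B_def C0_def by (rule boundary_card[OF G SV rVS])
    have BS: "B \<subseteq> S" by (auto simp: B_def)
    have closed: "b \<in> S" if "a \<in> C0" "(a, b) \<in> E" "b \<notin> C0" for a b
    proof (rule ccontr)
      assume "b \<notin> S"
      moreover have "b \<in> V" using that EV by auto
      ultimately have "b \<in> C0" using reach_step[of a E "V - S" r b] that C0sub by (auto simp: C0_def)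
      thus False using that by simp
    qed
    define H where "H = insert r B"
    have HV: "H \<subseteq> V" using BS SV rV by (auto simp: H_def)
    have cardH: "card H \<le> graph_vc_dim V E + 1"
    proof -
      have "card H \<le> Suc (card B)" unfolding H_def
        using BS SV finV by (simp add: card_insert_if finite_subset)
      thus ?thesis using cardB by simp
    qed
    have main: False if W: "W \<in> F" "W \<inter> H = {}" "W \<inter> S \<noteq> {}" for W
    proof -
      have rW: "r \<notin> W" using W by (auto simp: H_def)
      have "S \<subseteq> RV" using meet[OF SF SRV] .
      hence "W \<inter> RV \<noteq> {}" using W(3) by blast
      hence WF': "W \<in> F'" using W rW by (auto simp: F'_def)
      have WV: "W \<subseteq> V" using Fc W by auto
      have WC0: "W \<inter> C0 = {}"
      proof (rule ccontr)
        assume "W \<inter> C0 \<noteq> {}"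
        then obtain c where c: "c \<in> W" "c \<in> C0" by blast
        obtain w where w: "w \<in> W" "w \<in> S" using W(3) by blast
        have "(c, w) \<in> (E \<inter> W \<times> W)\<^sup>*" using Fc W c w by (auto simp: induced_connected_def)
        moreover have "w \<notin> C0" using w C0sub by auto
        ultimately obtain a b where ab: "(a, b) \<in> E \<inter> W \<times> W" "a \<in> C0" "b \<notin> C0"
          using exit_edge[of c w "E \<inter> W \<times> W" C0] c(2) by blast
        have "b \<in> S" using closed ab by auto
        moreover have "(b, a) \<in> E" using ab symE by (auto dest: symD)
        ultimately have "b \<in> B" using ab by (auto simp: B_def)
        thus False using ab W(2) by (auto simp: H_def)
      qed
      have rVW: "r \<in> V - W" using rV rW by simp
      have C0W: "C0 \<subseteq> reach E (V - W) r"
      proof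
        fix x assume x: "x \<in> C0"
        have "(r, x) \<in> (E \<inter> (V - S) \<times> (V - S))\<^sup>*" using x by (simp add: C0_def reach_def)
        from reach_inside[OF this] have "(r, x) \<in> (E \<inter> C0 \<times> C0)\<^sup>*" by (simp add: C0_def)
        moreover have "(E \<inter> C0 \<times> C0)\<^sup>* \<subseteq> (E \<inter> (V - W) \<times> (V - W))\<^sup>*"
          using C0sub WC0 by (intro rtrancl_mono) auto
        ultimately show "x \<in> reach E (V - W) r" by (auto simp: reach_def)
      qed
      have Bne: "B \<noteq> {}"
      proof -
        obtain s where s: "s \<in> S" "s \<in> RV" using SRV by blast
        have "(r, s) \<in> (E \<inter> V \<times> V)\<^sup>*" using s by (simp add: RV_def reach_def)
        moreover have "s \<notin> C0" using s C0sub by auto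
        ultimately obtain a b where ab: "(a, b) \<in> E \<inter> V \<times> V" "a \<in> C0" "b \<notin> C0"
          using exit_edge[of r s "E \<inter> V \<times> V" C0] rC0 by blast
        have "b \<in> S" using closed ab by auto
        moreover have "(b, a) \<in> E" using ab symE by (auto dest: symD)
        ultimately have "b \<in> B" using ab by (auto simp: B_def)
        thus ?thesis by blast
      qed
      have BW: "B \<subseteq> reach E (V - W) r"
      proof
        fix b assume b: "b \<in> B"
        then obtain c where c: "c \<in> C0" "(b, c) \<in> E" by (auto simp: B_def)
        have "(c, b) \<in> E" using c symE by (auto dest: symD)
        moreover have "b \<in> V - W" using b BS SV W(2) by (auto simp: H_def)
        moreover have "c \<in> V - W" using c C0sub WC0 by auto
        ultimately show "b \<in> reach E (V - W) r" using reach_step[of c E "V - W" r b] C0W c by auto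
      qed
      have "C0 \<subset> reach E (V - W) r"
      proof -
        obtain b where b: "b \<in> B" using Bne by blast
        hence "b \<notin> C0" using BS C0sub by auto
        thus ?thesis using C0W BW b by blast
      qed
      moreover have "finite (reach E (V - W) r)"
        using reach_subset[OF rVW] finV by (meson finite_Diff finite_subset)
      ultimately have "card C0 < f W" unfolding f_def by (rule psubset_card_mono[rotated])
      moreover have "f W \<le> f S" using Smax WF' by blast
      ultimately show False by (simp add: f_def C0_def)
    qed
    show ?thesis
      by (rule exI[of _ H], rule exI[of _ S]) (use SF HV cardH main in blast)
  qed
qed

lemma main_ind:
  assumes G: "simple_graph V E"
  shows "finite F \<Longrightarrow> \<forall>W\<in>F. W \<subseteq> V \<and> induced_connected E W \<Longrightarrow>
    \<exists>T P. T \<subseteq> V \<and> P \<subseteq> F \<and> disjoint P \<and> (\<forall>W\<in>F. W \<inter> T \<noteq> {})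
      \<and> card T \<le> (graph_vc_dim V E + 1) * card P"
proof (induction F rule: finite_psubset_induct)
  case (psubset F)
  show ?case
  proof (cases "F = {}")
    case True
    show ?thesis by (rule exI[of _ "{}"], rule exI[of _ "{}"]) (simp add: True)
  next
    case False
    obtain H S where S: "S \<in> F" and HV: "H \<subseteq> V" and cH: "card H \<le> graph_vc_dim V E + 1"
      and hprop: "\<forall>W\<in>F. W \<inter> H = {} \<longrightarrow> W \<inter> S = {}"
      using key[OF G psubset(3) psubset(1) False] by blast
    define F' where "F' = {W\<in>F. W \<inter> H = {}}"
    have Sne: "S \<noteq> {}" using psubset(3) S by (auto simp: induced_connected_def)
    have SF': "S \<notin> F'" using hprop S Sne by (auto simp: F'_def)
    have "F' \<subset> F" using S SF' by (auto simp: F'_def)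
    moreover have "\<forall>W\<in>F'. W \<subseteq> V \<and> induced_connected E W" using psubset(3) by (auto simp: F'_def)
    ultimately obtain T P where T: "T \<subseteq> V" and P: "P \<subseteq> F'" "disjoint P" and hit: "\<forall>W\<in>F'. W \<inter> T \<noteq> {}"
      and cT: "card T \<le> (graph_vc_dim V E + 1) * card P"
      using psubset(2) by meson
    have finV: "finite V" using G by (simp add: simple_graph_def)
    have finP: "finite P" using P(1) psubset(1) by (meson \<open>F' \<subset> F\<close> finite_subset psubset_imp_subset)
    have SP: "S \<notin> P" using P SF' by blast
    show ?thesis
    proof (intro exI conjI)
      show "T \<union> H \<subseteq> V" using T HV by simp
      show "insert S P \<subseteq> F" using S P(1) by (auto simp: F'_def)
      show "disjoint (insert S P)"
      proof -
        have "\<forall>W\<in>P. W \<inter> S = {}" using P(1) hprop unfolding F'_def by blast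
        hence "\<forall>W\<in>P. W \<noteq> S \<longrightarrow> disjnt S W \<and> disjnt W S"
          by (auto simp: disjnt_def)
        thus ?thesis unfolding pairwise_insert using P(2) by blast
      qed
      show "\<forall>W\<in>F. W \<inter> (T \<union> H) \<noteq> {}" using hit by (auto simp: F'_def)
      have "card (T \<union> H) \<le> card T + card H" by (rule card_Un_le)
      also have "\<dots> \<le> (graph_vc_dim V E + 1) * card P + (graph_vc_dim V E + 1)" using cT cH by simp
      also have "\<dots> = (graph_vc_dim V E + 1) * card (insert S P)" using finP SP by simp
      finally show "card (T \<union> H) \<le> (graph_vc_dim V E + 1) * card (insert S P)" .
    qed
  qed
qed

theorem theorem4p2:
  fixes V :: "'a set" and E :: "('a \<times> 'a) set" and v :: "'a set \<Rightarrow> nat" and d :: nat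
  assumes "simple_graph V E"
    and "graph_vc_dim V E = d"
    and "coalition_game V E v"
    and "simple_game V v"
  shows "real (kappa V v) / real (rho V v) \<le> real d + 1"
proof -
  note G = assms(1)
  have finV: "finite V" using G by (simp add: simple_graph_def)
  have v01: "\<And>S. S \<subseteq> V \<Longrightarrow> v S = 0 \<or> v S = 1" using assms(4) by (auto simp: simple_game_def)
  define F where "F = {S. S \<subseteq> V \<and> v S = 1}"
  have finF: "finite F"
  proof -
    have "F \<subseteq> Pow V" by (auto simp: F_def)
    thus ?thesis using finV by (meson finite_Pow_iff finite_subset)
  qed
  have Fc: "\<forall>W\<in>F. W \<subseteq> V \<and> induced_connected E W"
  proof
    fix W assume W: "W \<in> F"
    have "W \<noteq> {}" using W assms(3) by (auto simp: F_def coalition_game_def)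
    thus "W \<subseteq> V \<and> induced_connected E W" using W assms(3) by (auto simp: F_def coalition_game_def)
  qed
  obtain T P where T: "T \<subseteq> V" and P: "P \<subseteq> F" "disjoint P" and hit: "\<forall>W\<in>F. W \<inter> T \<noteq> {}"
    and cT: "card T \<le> (d + 1) * card P"
    using main_ind[OF G finF Fc] assms(2) by blast
  obtain S0 where S0: "S0 \<subseteq> V" "v S0 \<noteq> 0" using assms(3) by (auto simp: coalition_game_def)
  have S0F: "S0 \<in> F" using S0 v01[OF S0(1)] by (auto simp: F_def)
  have finP: "finite P" using P(1) finF finite_subset by blast
  have Pne: "card P \<ge> 1"
  proof (rule ccontr)
    assume "\<not> card P \<ge> 1"
    hence "card P = 0" by simp
    hence "card T = 0" using cT by simp
    hence "T = {}" using T finV by (meson card_0_eq finite_subset)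
    thus False using hit S0F by blast
  qed
  define x where "x = (\<lambda>i. if i \<in> T then 1 else 0 :: nat)"
  have sumx: "sum x A = card (A \<inter> T)" if "finite A" for A
    using that unfolding x_def by (simp add: sum.If_cases)
  have xok: "\<forall>S. S \<subseteq> V \<longrightarrow> sum x S \<ge> v S"
  proof (intro allI impI)
    fix S assume SV: "S \<subseteq> V"
    have finS: "finite S" using SV finV finite_subset by blast
    show "sum x S \<ge> v S"
    proof (cases "v S = 1")
      case True
      hence "S \<inter> T \<noteq> {}" using hit SV by (auto simp: F_def)
      hence "card (S \<inter> T) \<ge> 1" using finS by (simp add: Suc_le_eq card_gt_0_iff)
      thus ?thesis using True sumx[OF finS] by simp
    next
      case False thus ?thesis using v01[OF SV] by simp
    qed
  qed
  have kap: "kappa V v \<le> card T"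
  proof -
    have "sum x V \<in> {sum x V | x :: 'a \<Rightarrow> nat. \<forall>S. S \<subseteq> V \<longrightarrow> sum x S \<ge> v S}"
      using xok by blast
    hence "kappa V v \<le> sum x V" unfolding kappa_def
      by (intro cInf_lower) (auto intro: bdd_belowI[of _ 0])
    also have "sum x V = card T" using sumx[OF finV] T by (simp add: Int_absorb1)
    finally show ?thesis .
  qed
  have rh: "card P \<le> rho V v"
  proof -
    have "sum v P = card P"
    proof -
      have "sum v P = sum (\<lambda>_. 1) P" using P(1) by (intro sum.cong) (auto simp: F_def)
      thus ?thesis by simp
    qed
    moreover have "P \<subseteq> Pow V" using P(1) by (auto simp: F_def)
    ultimately have mem: "card P \<in> {sum v P | P. P \<subseteq> Pow V \<and> disjoint P}"
      using P(2) by (intro CollectI exI[of _ P]) simp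
    have "{sum v P | P. P \<subseteq> Pow V \<and> disjoint P} \<subseteq> (sum v) ` Pow (Pow V)" by auto
    hence "finite {sum v P | P. P \<subseteq> Pow V \<and> disjoint P}"
      using finV by (meson finite_Pow_iff finite_imageI finite_subset)
    thus ?thesis unfolding rho_def using mem by (rule Max_ge)
  qed
  have "kappa V v \<le> (d + 1) * rho V v"
    using le_trans[OF kap le_trans[OF cT mult_le_mono2[OF rh]]] .
  hence "real (kappa V v) \<le> real ((d + 1) * rho V v)" by (rule of_nat_mono)
  hence k: "real (kappa V v) \<le> (real d + 1) * real (rho V v)" by (simp add: algebra_simps)
  have rpos: "real (rho V v) > 0" using Pne rh by simp
  show ?thesis using k rpos by (simp add: divide_le_eq)
qed

end
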